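(* Let $p=2$, and let $F$, $K=F(\sqrt{a})$, $G=\langle\sigma\rangle$, $J$ and $N$ be as in the context. Then, as an $\mathbb{F}_2[G]$-module, $J$ decomposes as an internal direct sum $$J=X\oplus Y\oplus Z,$$ where (1) $X$ has $\mathbb{F}_2$-dimension $1$ if $-1\in N(K^\times)$, and $X=\{0\}$ otherwise; (2) $Y$ is a free $\mathbb{F}_2[G]$-submodule with $Y^G=N(J)$; (3) $Z$ is a trivial $\mathbb{F}_2[G]$-module. Moreover, the rank of any maximal free $\mathbb{F}_2[G]$-submodule of $J$ equals $\dim_{\mathbb{F}_2}N(J)$.
   Context: Let $F$ be a field of characteristic different from $2$. Let $a\in F^\times\setminus F^{\times 2}$ and $K=F(\sqrt{a})$, a quadratic extension; $K^\times=K\setminus\{0\}$. Let $G=\mathrm{Gal}(K/F)=\langle\sigma\rangle$ with $\sigma(\sqrt a)=-\sqrt a$. Let $J=K^\times/K^{\times 2}$, an $\mathbb{F}_2[G]$-module (elements denoted $[\gamma]$, $\gamma\in K^\times$). For a $G$-module $V$, $V^G$ denotes the submodule of $G$-fixed elements. Let $N=1+\sigma\in\mathbb{F}_2[G]$, also viewed as the endomorphism of $J$ it induces; $N(J)$ is its image. $N(K^\times)\subseteq F^\times$ denotes the group of norms from $K$ to $F$. *)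

theory Defs
  imports Main "HOL-Library.Equipollence"
begin

text \<open>The field K is the type 'k; the generator sigma of Gal(K/F) is a field
automorphism of order 2; F is its fixed field.\<close>

definition qaut :: "('k::field \<Rightarrow> 'k) \<Rightarrow> bool" where
  "qaut \<sigma> \<longleftrightarrow> bij \<sigma> \<and> (\<forall>x y. \<sigma> (x + y) = \<sigma> x + \<sigma> y) \<and>
     (\<forall>x y. \<sigma> (x * y) = \<sigma> x * \<sigma> y) \<and> \<sigma> 1 = 1 \<and>
     (\<forall>x. \<sigma> (\<sigma> x) = x) \<and> \<sigma> \<noteq> id"

definition fixfield :: "('k::field \<Rightarrow> 'k) \<Rightarrow> 'k set" where
  "fixfield \<sigma> = {x. \<sigma> x = x}"

text \<open>Square classes: [gamma] = gamma K^{x2}; J = K^x / K^{x2} as a set of cosets.\<close>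

definition sqclass :: "'k::field \<Rightarrow> 'k set" where
  "sqclass g = {g * s ^ 2 | s. s \<noteq> 0}"

definition Jgrp :: "'k::field set set" where
  "Jgrp = sqclass ` {x. x \<noteq> 0}"

definition jmul :: "'k::field set \<Rightarrow> 'k set \<Rightarrow> 'k set" where
  "jmul A B = {x * y | x y. x \<in> A \<and> y \<in> B}"

definition jone :: "'k::field set" where
  "jone = sqclass 1"

definition jsig :: "('k::field \<Rightarrow> 'k) \<Rightarrow> 'k set \<Rightarrow> 'k set" where
  "jsig \<sigma> A = \<sigma> ` A"

text \<open>The norm endomorphism N = 1 + sigma, and its image N(J).\<close>
definition jnorm :: "('k::field \<Rightarrow> 'k) \<Rightarrow> 'k set \<Rightarrow> 'k set" where
  "jnorm \<sigma> A = jmul A (jsig \<sigma> A)"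

definition NJ :: "('k::field \<Rightarrow> 'k) \<Rightarrow> 'k set set" where
  "NJ \<sigma> = jnorm \<sigma> ` Jgrp"

definition jsubspace :: "'k::field set set \<Rightarrow> bool" where
  "jsubspace V \<longleftrightarrow> V \<subseteq> Jgrp \<and> jone \<in> V \<and> (\<forall>A\<in>V. \<forall>B\<in>V. jmul A B \<in> V)"

definition jsubmodule :: "('k::field \<Rightarrow> 'k) \<Rightarrow> 'k set set \<Rightarrow> bool" where
  "jsubmodule \<sigma> V \<longleftrightarrow> jsubspace V \<and> (\<forall>A\<in>V. jsig \<sigma> A \<in> V)"

inductive_set jspan :: "'k::field set set \<Rightarrow> 'k set set" for S where
  one: "jone \<in> jspan S"
| mul: "s \<in> S \<Longrightarrow> x \<in> jspan S \<Longrightarrow> jmul s x \<in> jspan S"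

definition jindep :: "'k::field set set \<Rightarrow> bool" where
  "jindep S \<longleftrightarrow> (\<forall>s\<in>S. s \<notin> jspan (S - {s}))"

definition jbasis :: "'k::field set set \<Rightarrow> 'k set set \<Rightarrow> bool" where
  "jbasis B V \<longleftrightarrow> B \<subseteq> V \<and> jindep B \<and> jspan B = V"

definition jfree_basis :: "('k::field \<Rightarrow> 'k) \<Rightarrow> 'k set set \<Rightarrow> 'k set set \<Rightarrow> bool" where
  "jfree_basis \<sigma> B V \<longleftrightarrow> B \<inter> jsig \<sigma> ` B = {} \<and> jbasis (B \<union> jsig \<sigma> ` B) V"

definition jfree :: "('k::field \<Rightarrow> 'k) \<Rightarrow> 'k set set \<Rightarrow> bool" where
  "jfree \<sigma> V \<longleftrightarrow> jsubmodule \<sigma> V \<and> (\<exists>B. jfree_basis \<sigma> B V)"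

definition jmax_free :: "('k::field \<Rightarrow> 'k) \<Rightarrow> 'k set set \<Rightarrow> bool" where
  "jmax_free \<sigma> V \<longleftrightarrow> jfree \<sigma> V \<and> (\<forall>W. jfree \<sigma> W \<and> V \<subseteq> W \<longrightarrow> W = V)"

definition jfixed :: "('k::field \<Rightarrow> 'k) \<Rightarrow> 'k set set \<Rightarrow> 'k set set" where
  "jfixed \<sigma> V = {A \<in> V. jsig \<sigma> A = A}"

definition jdirect3 :: "'k::field set set \<Rightarrow> 'k set set \<Rightarrow> 'k set set \<Rightarrow> 'k set set \<Rightarrow> bool" where
  "jdirect3 V X Y Z \<longleftrightarrow> (\<forall>A\<in>V. \<exists>!(x, y, z). x \<in> X \<and> y \<in> Y \<and> z \<in> Z \<and> A = jmul x (jmul y z))"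

end

theory Submission
  imports Defs
begin

lemma sq_mul: fixes g h :: "'k::field" shows "jmul (sqclass g) (sqclass h) = sqclass (g * h)"
proof (rule set_eqI, rule iffI)
  fix x assume "x \<in> jmul (sqclass g) (sqclass h)"
  then obtain s t where "s\<noteq>0" "t\<noteq>0" "x = g*s^2 * (h*t^2)" unfolding jmul_def sqclass_def by blast
  then show "x \<in> sqclass (g*h)" unfolding sqclass_def
    by (intro CollectI exI[of _ "s*t"]) (simp add: power_mult_distrib algebra_simps)
next
  fix x assume "x \<in> sqclass (g*h)"
  then obtain r where "r\<noteq>0" "x = g*h*r^2" unfolding sqclass_def by blast
  then show "x \<in> jmul (sqclass g) (sqclass h)" unfolding jmul_def sqclass_def
    by (intro CollectI exI[of _ "g*r^2"] exI[of _ h]) (auto intro: exI[of _ 1])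
qed

lemma sq_self: fixes g :: "'k::field" shows "g \<noteq> 0 \<Longrightarrow> sqclass (g * g) = sqclass 1"
proof (rule set_eqI, rule iffI)
  fix x :: 'k assume g: "g \<noteq> 0" and "x \<in> sqclass (g*g)"
  then obtain s where "s\<noteq>0" "x = g*g*s^2" unfolding sqclass_def by blast
  then show "x \<in> sqclass 1" unfolding sqclass_def using g
    by (intro CollectI exI[of _ "g*s"]) (simp add: power2_eq_square algebra_simps)
next
  fix x :: 'k assume g: "g \<noteq> 0" and "x \<in> sqclass 1"
  then obtain s where "s\<noteq>0" "x = 1*s^2" unfolding sqclass_def by blast
  then show "x \<in> sqclass (g*g)" unfolding sqclass_def using g
    by (intro CollectI exI[of _ "s/g"]) (simp add: power2_eq_square field_simps)
qed

lemma sq_mem: fixes g :: "'k::field" shows "g \<in> sqclass g"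
  unfolding sqclass_def by (auto intro: exI[of _ 1])

lemma Jgrp_iff: "A \<in> Jgrp \<longleftrightarrow> (\<exists>g. g \<noteq> 0 \<and> A = sqclass g)"
  unfolding Jgrp_def by auto

lemma jmul_comm: "jmul A B = jmul B A"
  unfolding jmul_def by (auto simp: mult.commute; metis mult.commute)
lemma jmul_assoc: "jmul (jmul A B) C = jmul A (jmul B C)"
  unfolding jmul_def by (auto simp: mult.assoc; metis mult.assoc)
lemma jmul_lcomm: "jmul A (jmul B C) = jmul B (jmul A C)"
  by (metis jmul_assoc jmul_comm)
lemmas jac = jmul_assoc jmul_comm jmul_lcomm

lemma jone_J[simp]: "jone \<in> Jgrp"
  unfolding jone_def Jgrp_iff by (intro exI[of _ 1]) auto
lemma jmul_J[simp]: "A \<in> Jgrp \<Longrightarrow> B \<in> Jgrp \<Longrightarrow> jmul A B \<in> Jgrp"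
  unfolding Jgrp_iff by (metis sq_mul no_zero_divisors)
lemma jone_mul[simp]: "A \<in> Jgrp \<Longrightarrow> jmul jone A = A"
  unfolding Jgrp_iff jone_def by (auto simp: sq_mul)
lemma mul_jone[simp]: "A \<in> Jgrp \<Longrightarrow> jmul A jone = A"
  using jone_mul jmul_comm by metis
lemma jself[simp]: "A \<in> Jgrp \<Longrightarrow> jmul A A = jone"
  unfolding Jgrp_iff jone_def by (auto simp: sq_mul sq_self)
lemma jself2[simp]: "A \<in> Jgrp \<Longrightarrow> B \<in> Jgrp \<Longrightarrow> jmul A (jmul A B) = B"
  by (metis jmul_assoc jself jone_mul)
lemma jcancel: "A \<in> Jgrp \<Longrightarrow> B \<in> Jgrp \<Longrightarrow> jmul A B = jone \<Longrightarrow> A = B"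
  by (metis jself2 mul_jone)
lemma jcancel_iff: "A \<in> Jgrp \<Longrightarrow> B \<in> Jgrp \<Longrightarrow> jmul A B = jone \<longleftrightarrow> A = B"
  using jcancel by auto

locale qctx =
  fixes \<sigma> :: "'k::field \<Rightarrow> 'k"
  assumes char: "(2::'k) \<noteq> 0" and aut: "qaut \<sigma>"
begin

lemma s_add: "\<sigma> (x + y) = \<sigma> x + \<sigma> y" using aut by (simp add: qaut_def)
lemma s_mul: "\<sigma> (x * y) = \<sigma> x * \<sigma> y" using aut by (simp add: qaut_def)
lemma s_one[simp]: "\<sigma> 1 = 1" using aut by (simp add: qaut_def)
lemma s_s[simp]: "\<sigma> (\<sigma> x) = x" using aut by (simp add: qaut_def)
lemma s_nid: "\<exists>t. \<sigma> t \<noteq> t" using aut unfolding qaut_def by (metis eq_id_iff)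
lemma s_zero[simp]: "\<sigma> 0 = 0"
  by (metis add_cancel_right_right s_add add_0)
lemma s_neg: "\<sigma> (- x) = - \<sigma> x" using s_add[of x "-x"] by (simp add: eq_neg_iff_add_eq_0 add.commute)
lemma s_inj: "\<sigma> x = \<sigma> y \<longleftrightarrow> x = y" by (metis s_s)
lemma s_nz[simp]: "\<sigma> x = 0 \<longleftrightarrow> x = 0" by (metis s_s s_zero)
lemma s_pow2: "\<sigma> (x ^ 2) = (\<sigma> x) ^ 2" by (simp add: power2_eq_square s_mul)

lemma sq_sig: "jsig \<sigma> (sqclass g) = sqclass (\<sigma> g)"
proof (rule set_eqI, rule iffI)
  fix x assume "x \<in> jsig \<sigma> (sqclass g)"
  then obtain s where "s\<noteq>0" "x = \<sigma> (g*s^2)" unfolding jsig_def sqclass_def by blast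
  then show "x \<in> sqclass (\<sigma> g)" unfolding sqclass_def
    by (intro CollectI exI[of _ "\<sigma> s"]) (simp add: s_mul s_pow2)
next
  fix x assume "x \<in> sqclass (\<sigma> g)"
  then obtain t where "t\<noteq>0" "x = \<sigma> g * t^2" unfolding sqclass_def by blast
  then show "x \<in> jsig \<sigma> (sqclass g)" unfolding jsig_def sqclass_def
    by (intro image_eqI[of _ _ "g * (\<sigma> t)^2"]) (auto simp: s_mul s_pow2)
qed

lemma jsig_J[simp]: "A \<in> Jgrp \<Longrightarrow> jsig \<sigma> A \<in> Jgrp"
  unfolding Jgrp_iff by (metis sq_sig s_nz)
lemma jsig_jsig[simp]: "jsig \<sigma> (jsig \<sigma> A) = A"
  unfolding jsig_def by (auto simp: image_image)
lemma jsig_mul: "jsig \<sigma> (jmul A B) = jmul (jsig \<sigma> A) (jsig \<sigma> B)"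
proof (rule set_eqI, rule iffI)
  fix z assume "z \<in> jsig \<sigma> (jmul A B)"
  then obtain x y where "x \<in> A" "y \<in> B" "z = \<sigma> (x*y)" unfolding jsig_def jmul_def by blast
  then show "z \<in> jmul (jsig \<sigma> A) (jsig \<sigma> B)" unfolding jsig_def jmul_def by (auto simp: s_mul)
next
  fix z assume "z \<in> jmul (jsig \<sigma> A) (jsig \<sigma> B)"
  then obtain x y where "x \<in> A" "y \<in> B" "z = \<sigma> x * \<sigma> y" unfolding jsig_def jmul_def by blast
  then show "z \<in> jsig \<sigma> (jmul A B)" unfolding jsig_def jmul_def by (auto simp: s_mul[symmetric])
qed
lemma jsig_one[simp]: "jsig \<sigma> jone = jone"
  unfolding jone_def by (simp add: sq_sig)
lemma jsig_inj: "jsig \<sigma> A = jsig \<sigma> B \<longleftrightarrow> A = B"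
  by (metis jsig_jsig)

end

lemma jspan_J: "S \<subseteq> Jgrp \<Longrightarrow> jspan S \<subseteq> Jgrp"
proof
  fix x assume S: "S \<subseteq> Jgrp" and x: "x \<in> jspan S"
  from x show "x \<in> Jgrp" by (induction rule: jspan.induct) (use S in auto)
qed

lemma jspan_J': "S \<subseteq> Jgrp \<Longrightarrow> x \<in> jspan S \<Longrightarrow> x \<in> Jgrp"
  using jspan_J by blast

lemma jspan_mul: assumes S: "S \<subseteq> Jgrp" and x: "x \<in> jspan S" and y: "y \<in> jspan S"
  shows "jmul x y \<in> jspan S"
  using x
proof (induction rule: jspan.induct)
  case one then show ?case using y jspan_J'[OF S y] by simp
next
  case (mul s x) then show ?case by (simp add: jmul_assoc jspan.mul)
qed

lemma jspan_sub: "S \<subseteq> Jgrp \<Longrightarrow> s \<in> S \<Longrightarrow> s \<in> jspan S"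
  using jspan.mul[OF _ jspan.one, of s S] by auto

lemma jspan_subspace: "S \<subseteq> Jgrp \<Longrightarrow> jsubspace (jspan S)"
  unfolding jsubspace_def using jspan_J jspan.one jspan_mul by blast

lemma jsubspaceD: assumes "jsubspace V"
  shows "V \<subseteq> Jgrp" "jone \<in> V" "A \<in> V \<Longrightarrow> B \<in> V \<Longrightarrow> jmul A B \<in> V"
  using assms unfolding jsubspace_def by auto

lemma jspan_least: assumes V: "jsubspace V" and S: "S \<subseteq> V" shows "jspan S \<subseteq> V"
proof
  fix x assume "x \<in> jspan S" then show "x \<in> V"
  proof (induction rule: jspan.induct)
    case one then show ?case using jsubspaceD(2)[OF V] .
  next
    case (mul s x) then show ?case using jsubspaceD(3)[OF V] S by blast
  qed
qed

lemma jspan_mono: "S \<subseteq> T \<Longrightarrow> jspan S \<subseteq> jspan T"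
proof
  fix x assume ST: "S \<subseteq> T" and x: "x \<in> jspan S" from x show "x \<in> jspan T"
    by (induction rule: jspan.induct) (use ST in \<open>auto intro: jspan.intros\<close>)
qed

lemma jspan_empty: "jspan {} = {jone}"
proof -
  have "x = jone" if "x \<in> jspan {}" for x :: "'a::field set" using that by (induction rule: jspan.induct) auto
  then show ?thesis using jspan.one by blast
qed

lemma jspan_insert: assumes a: "a \<in> Jgrp" and S: "S \<subseteq> Jgrp"
  shows "jspan (insert a S) = jspan S \<union> jmul a ` jspan S"
proof
  show "jspan (insert a S) \<subseteq> jspan S \<union> jmul a ` jspan S"
  proof
    fix x assume "x \<in> jspan (insert a S)"
    then show "x \<in> jspan S \<union> jmul a ` jspan S"
    proof (induction rule: jspan.induct)
      case one then show ?case using jspan.one by blast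
    next
      case (mul s x)
      from mul.IH show ?case
      proof
        assume x: "x \<in> jspan S"
        show ?case
        proof (cases "s = a")
          case True then show ?thesis using x by blast
        next
          case False then have "s \<in> S" using mul by auto
          then show ?thesis using x jspan.mul by blast
        qed
      next
        assume "x \<in> jmul a ` jspan S"
        then obtain y where y: "y \<in> jspan S" "x = jmul a y" by blast
        have yJ: "y \<in> Jgrp" using jspan_J' S y by blast
        show ?case
        proof (cases "s = a")
          case True then show ?thesis using y a yJ by simp
        next
          case False then have "s \<in> S" using mul by auto
          then have "jmul s y \<in> jspan S" using y jspan.mul by blast
          then show ?thesis using y by (simp add: jmul_lcomm)
        qed
      qed
    qed
  qed
next
  have "jspan S \<subseteq> jspan (insert a S)" by (rule jspan_mono) auto
  moreover have "jmul a ` jspan S \<subseteq> jspan (insert a S)"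
    using jspan.mul[of a "insert a S"] jspan_mono[of S "insert a S"] by blast
  ultimately show "jspan S \<union> jmul a ` jspan S \<subseteq> jspan (insert a S)" by blast
qed

lemma jspan_finite: "x \<in> jspan S \<Longrightarrow> \<exists>T. finite T \<and> T \<subseteq> S \<and> x \<in> jspan T"
proof (induction rule: jspan.induct)
  case one then show ?case using jspan.one by blast
next
  case (mul s x)
  then obtain T where T: "finite T" "T \<subseteq> S" "x \<in> jspan T" by blast
  then have "jmul s x \<in> jspan (insert s T)"
    using jspan.mul[of s "insert s T"] jspan_mono[of T "insert s T"] by blast
  then show ?case using T mul by (intro exI[of _ "insert s T"]) auto
qed

lemma jindep_mono: "jindep T \<Longrightarrow> S \<subseteq> T \<Longrightarrow> jindep S"
  unfolding jindep_def
proof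
  fix s assume "\<forall>s\<in>T. s \<notin> jspan (T - {s})" "S \<subseteq> T" "s \<in> S"
  moreover have "jspan (S - {s}) \<subseteq> jspan (T - {s})" using \<open>S \<subseteq> T\<close> by (intro jspan_mono) auto
  ultimately show "s \<notin> jspan (S - {s})" by blast
qed

lemma jindep_finitary: assumes "\<And>T. finite T \<Longrightarrow> T \<subseteq> S \<Longrightarrow> jindep T" shows "jindep S"
  unfolding jindep_def
proof
  fix s assume s: "s \<in> S" show "s \<notin> jspan (S - {s})"
  proof
    assume "s \<in> jspan (S - {s})"
    then obtain T where T: "finite T" "T \<subseteq> S - {s}" "s \<in> jspan T" using jspan_finite by blast
    then have "jindep (insert s T)" using assms[of "insert s T"] s by auto
    moreover have "insert s T - {s} = T" using T by auto
    ultimately show False using T unfolding jindep_def by auto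
  qed
qed

lemma jindep_insert: assumes S: "S \<subseteq> Jgrp" and a: "a \<in> Jgrp" and ind: "jindep S" and na: "a \<notin> jspan S"
  shows "jindep (insert a S)"
  unfolding jindep_def
proof
  fix s assume s: "s \<in> insert a S"
  have aS: "a \<notin> S" using na jspan_sub[OF S] by blast
  show "s \<notin> jspan (insert a S - {s})"
  proof (cases "s = a")
    case True then show ?thesis using na aS by simp
  next
    case False
    then have sS: "s \<in> S" using s by auto
    have eq: "insert a S - {s} = insert a (S - {s})" using False by auto
    have S': "S - {s} \<subseteq> Jgrp" using S by auto
    show ?thesis
    proof
      assume "s \<in> jspan (insert a S - {s})"
      then have "s \<in> jspan (S - {s}) \<union> jmul a ` jspan (S - {s})"
        using jspan_insert[OF a S'] eq by simp
      then show False
      proof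
        assume "s \<in> jspan (S - {s})" then show False using ind sS unfolding jindep_def by blast
      next
        assume "s \<in> jmul a ` jspan (S - {s})"
        then obtain y where y: "y \<in> jspan (S - {s})" "s = jmul a y" by blast
        have yJ: "y \<in> Jgrp" using jspan_J' S' y by blast
        have "y \<in> jspan S" using y jspan_mono[of "S - {s}" S] by blast
        moreover have "s \<in> jspan S" using jspan_sub[OF S sS] .
        ultimately have "jmul s y \<in> jspan S" using jspan_mul[OF S] by blast
        moreover have "jmul s y = a" using y yJ a by (simp add: jac)
        ultimately show False using na by simp
      qed
    qed
  qed
qed

lemma complement:
  assumes U: "jsubspace U" and V: "jsubspace V" and UV: "U \<subseteq> V"
  shows "\<exists>W. jsubspace W \<and> W \<subseteq> V \<and> U \<inter> W = {jone} \<and> (\<forall>v\<in>V. \<exists>u\<in>U. \<exists>w\<in>W. v = jmul u w)"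
proof -
  define \<A> where "\<A> = {W. W \<subseteq> V \<and> U \<inter> W \<subseteq> {jone} \<and> (\<forall>A\<in>W. \<forall>B\<in>W. jmul A B \<in> W)}"
  have VJ: "V \<subseteq> Jgrp" and oneV: "jone \<in> V" using V jsubspaceD by auto
  have "{jone} \<in> \<A>" unfolding \<A>_def using oneV by auto
  then have ne: "\<A> \<noteq> {}" by blast
  have "\<exists>M\<in>\<A>. \<forall>X\<in>\<A>. M \<subseteq> X \<longrightarrow> X = M"
  proof (rule subset_Zorn_nonempty[OF ne])
    fix \<C> assume C: "\<C> \<noteq> {}" "subset.chain \<A> \<C>"
    then have CA: "\<C> \<subseteq> \<A>" and tot: "\<And>X Y. X \<in> \<C> \<Longrightarrow> Y \<in> \<C> \<Longrightarrow> X \<subseteq> Y \<or> Y \<subseteq> X"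
      unfolding subset_chain_def by auto
    show "\<Union>\<C> \<in> \<A>" unfolding \<A>_def
    proof (intro CollectI conjI ballI)
      show "\<Union>\<C> \<subseteq> V" using CA unfolding \<A>_def by blast
      show "U \<inter> \<Union>\<C> \<subseteq> {jone}" using CA unfolding \<A>_def by blast
      fix A B assume "A \<in> \<Union>\<C>" "B \<in> \<Union>\<C>"
      then obtain X Y where XY: "X \<in> \<C>" "Y \<in> \<C>" "A \<in> X" "B \<in> Y" by blast
      show "jmul A B \<in> \<Union>\<C>"
        using tot[OF XY(1,2)]
      proof
        assume "X \<subseteq> Y" then show ?thesis using XY CA unfolding \<A>_def by blast
      next
        assume "Y \<subseteq> X" then show ?thesis using XY CA unfolding \<A>_def by blast
      qed
    qed
  qed
  then obtain W where W: "W \<in> \<A>" and max: "\<And>X. X \<in> \<A> \<Longrightarrow> W \<subseteq> X \<Longrightarrow> X = W" by blast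
  have WV: "W \<subseteq> V" and WU: "U \<inter> W \<subseteq> {jone}" and Wmul: "\<And>A B. A \<in> W \<Longrightarrow> B \<in> W \<Longrightarrow> jmul A B \<in> W"
    using W unfolding \<A>_def by auto
  have "insert jone W \<in> \<A>" unfolding \<A>_def
    using WV WU Wmul oneV VJ by auto
  then have oneW: "jone \<in> W" using max[of "insert jone W"] by blast
  have subW: "jsubspace W" unfolding jsubspace_def using WV VJ oneW Wmul by blast
  have oneU: "jone \<in> U" using U jsubspaceD by auto
  have UJ: "U \<subseteq> Jgrp" using U jsubspaceD by auto
  have span: "\<exists>u\<in>U. \<exists>w\<in>W. v = jmul u w" if v: "v \<in> V" for v
  proof (rule ccontr)
    assume nv: "\<not> (\<exists>u\<in>U. \<exists>w\<in>W. v = jmul u w)"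
    have vJ: "v \<in> Jgrp" using v VJ by auto
    let ?W = "W \<union> jmul v ` W"
    have "?W \<in> \<A>" unfolding \<A>_def
    proof (intro CollectI conjI ballI)
      show "?W \<subseteq> V" using WV v jsubspaceD(3)[OF V] by blast
      show "U \<inter> ?W \<subseteq> {jone}"
      proof
        fix x assume x: "x \<in> U \<inter> ?W"
        show "x \<in> {jone}"
        proof (cases "x \<in> W")
          case True then show ?thesis using x WU by blast
        next
          case False
          then obtain w where w: "w \<in> W" "x = jmul v w" using x by blast
          have "v = jmul x w" using w vJ WV VJ by (auto simp: jac)
          then show ?thesis using nv x w by blast
        qed
      qed
      fix A B assume A: "A \<in> ?W" and B: "B \<in> ?W"
      have AJ: "A \<in> Jgrp" and BJ: "B \<in> Jgrp" using A B WV VJ vJ by auto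
      show "jmul A B \<in> ?W"
      proof (cases "A \<in> W")
        case True note A' = this
        show ?thesis
        proof (cases "B \<in> W")
          case True then show ?thesis using A' Wmul by blast
        next
          case False then obtain b where b: "b \<in> W" "B = jmul v b" using B by blast
          have "jmul A B = jmul v (jmul A b)" using b by (simp add: jac)
          then show ?thesis using Wmul[OF A' b(1)] by blast
        qed
      next
        case False then obtain a where a: "a \<in> W" "A = jmul v a" using A by blast
        have aJ: "a \<in> Jgrp" using a WV VJ by auto
        show ?thesis
        proof (cases "B \<in> W")
          case True
          have "jmul A B = jmul v (jmul a B)" using a by (simp add: jac)
          then show ?thesis using Wmul[OF a(1) True] by blast
        next
          case False then obtain b where b: "b \<in> W" "B = jmul v b" using B by blast
          have bJ: "b \<in> Jgrp" using b WV VJ by auto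
          have "jmul A B = jmul a b" using a b vJ aJ bJ by (simp add: jac)
          then show ?thesis using Wmul[OF a(1) b(1)] by simp
        qed
      qed
    qed
    then have "?W = W" using max by blast
    then have "jmul v jone \<in> W" using oneW by blast
    then have "v \<in> W" using vJ by simp
    then have "v = jmul jone v" using vJ by simp
    then show False using nv oneU \<open>v \<in> W\<close> by blast
  qed
  have "U \<inter> W = {jone}" using WU oneU oneW by blast
  with subW WV span show ?thesis by (intro exI[of _ W]) simp
qed

lemma jswap: assumes "A \<in> Jgrp" "B \<in> Jgrp" "C \<in> Jgrp" "D \<in> Jgrp" "jmul A B = jmul C D"
  shows "jmul B D = jmul A C"
proof -
  have e1: "jmul (jmul A B) (jmul A D) = jmul (jmul A A) (jmul B D)" by (simp only: jac)
  have "jmul B D = jmul (jmul A B) (jmul A D)" unfolding e1 using assms by simp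
  also have "\<dots> = jmul (jmul C D) (jmul A D)" using assms by simp
  also have "\<dots> = jmul (jmul A C) (jmul D D)" by (simp only: jac)
  also have "\<dots> = jmul A C" using assms by simp
  finally show ?thesis .
qed

context qctx begin

definition Fam :: "'k set set set" where
  "Fam = {B. B \<subseteq> Jgrp \<and> B \<inter> jsig \<sigma> ` B = {} \<and> jindep (B \<union> jsig \<sigma> ` B)}"

lemma jnorm_J[simp]: "A \<in> Jgrp \<Longrightarrow> jnorm \<sigma> A \<in> Jgrp"
  unfolding jnorm_def by simp
lemma jnorm_mul: "jnorm \<sigma> (jmul A B) = jmul (jnorm \<sigma> A) (jnorm \<sigma> B)"
  unfolding jnorm_def by (simp add: jsig_mul jac)
lemma jnorm_fix[simp]: "jsig \<sigma> (jnorm \<sigma> A) = jnorm \<sigma> A"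
  unfolding jnorm_def by (simp add: jsig_mul jac)
lemma jnorm_one[simp]: "jnorm \<sigma> jone = jone"
  unfolding jnorm_def by simp
lemma fixed_iff: "A \<in> Jgrp \<Longrightarrow> jsig \<sigma> A = A \<longleftrightarrow> jnorm \<sigma> A = jone"
  unfolding jnorm_def using jcancel_iff[of A "jsig \<sigma> A"] by auto

lemma NJ_subspace: "jsubspace (NJ \<sigma>)"
  unfolding jsubspace_def NJ_def
proof (intro conjI ballI)
  show "jnorm \<sigma> ` Jgrp \<subseteq> Jgrp" by auto
  show "jone \<in> jnorm \<sigma> ` Jgrp" using jnorm_one jone_J by (metis image_eqI)
  fix A B assume "A \<in> jnorm \<sigma> ` Jgrp" "B \<in> jnorm \<sigma> ` Jgrp"
  then obtain a b where "a \<in> Jgrp" "b \<in> Jgrp" "A = jnorm \<sigma> a" "B = jnorm \<sigma> b" by blast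
  then show "jmul A B \<in> jnorm \<sigma> ` Jgrp" using jnorm_mul[of a b] by (metis image_eqI jmul_J)
qed

lemma span_sig: assumes S: "S \<subseteq> Jgrp" and x: "x \<in> jspan S" shows "jsig \<sigma> x \<in> jspan (jsig \<sigma> ` S)"
  using x
proof (induction rule: jspan.induct)
  case one then show ?case using jspan.one by simp
next
  case (mul s x) then show ?case by (simp add: jsig_mul jspan.mul)
qed

lemma span_submodule: assumes S: "S \<subseteq> Jgrp" and st: "jsig \<sigma> ` S \<subseteq> S"
  shows "jsubmodule \<sigma> (jspan S)"
  unfolding jsubmodule_def using jspan_subspace[OF S] span_sig[OF S] jspan_mono[OF st] by blast

lemma sig_union: "jsig \<sigma> ` (T \<union> jsig \<sigma> ` T) = T \<union> jsig \<sigma> ` T"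
  by (simp add: image_Un image_image Un_commute)

lemma FamD: assumes "B \<in> Fam" shows "B \<subseteq> Jgrp" "B \<inter> jsig \<sigma> ` B = {}" "jindep (B \<union> jsig \<sigma> ` B)"
  "B \<union> jsig \<sigma> ` B \<subseteq> Jgrp"
  using assms unfolding Fam_def by auto

lemma Fam_ext: assumes B: "B \<in> Fam" and x: "x \<in> Jgrp" and nx: "jnorm \<sigma> x \<notin> jspan (B \<union> jsig \<sigma> ` B)"
  shows "insert x B \<in> Fam"
proof -
  let ?S = "B \<union> jsig \<sigma> ` B"
  let ?M = "jspan ?S"
  have SJ: "?S \<subseteq> Jgrp" using FamD[OF B] by blast
  have sub: "jsubmodule \<sigma> ?M" using span_submodule[OF SJ] sig_union by simp
  then have Msig: "\<And>y. y \<in> ?M \<Longrightarrow> jsig \<sigma> y \<in> ?M" unfolding jsubmodule_def by blast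
  have xM: "x \<notin> ?M"
  proof
    assume "x \<in> ?M" then have "jsig \<sigma> x \<in> ?M" using Msig by blast
    then have "jnorm \<sigma> x \<in> ?M" unfolding jnorm_def using jspan_mul[OF SJ] \<open>x \<in> ?M\<close> by blast
    then show False using nx by blast
  qed
  have sxM: "jsig \<sigma> x \<notin> ?M" using xM Msig by force
  have xS: "x \<notin> ?S" using xM jspan_sub[OF SJ] by blast
  have sxS: "jsig \<sigma> x \<notin> ?S" using sxM jspan_sub[OF SJ] by blast
  have xsx: "x \<noteq> jsig \<sigma> x"
  proof
    assume "x = jsig \<sigma> x" then have "jnorm \<sigma> x = jone" unfolding jnorm_def using x by (metis jself)
    then show False using nx jspan.one by metis
  qed
  have ind1: "jindep (insert x ?S)" using jindep_insert[OF SJ x FamD(3)[OF B] xM] .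
  have SJ1: "insert x ?S \<subseteq> Jgrp" using SJ x by auto
  have "jsig \<sigma> x \<notin> jspan (insert x ?S)"
  proof
    assume "jsig \<sigma> x \<in> jspan (insert x ?S)"
    then have "jsig \<sigma> x \<in> ?M \<union> jmul x ` ?M" using jspan_insert[OF x SJ] by simp
    then show False
    proof
      assume "jsig \<sigma> x \<in> jmul x ` ?M"
      then obtain y where y: "y \<in> ?M" "jsig \<sigma> x = jmul x y" by blast
      have "y \<in> Jgrp" using y jspan_J' SJ by blast
      then have "jnorm \<sigma> x = y" unfolding jnorm_def using y x by simp
      then show False using nx y by simp
    qed (use sxM in simp)
  qed
  then have ind2: "jindep (insert (jsig \<sigma> x) (insert x ?S))"
    using jindep_insert[OF SJ1 _ ind1] x by simp
  have eq: "insert x B \<union> jsig \<sigma> ` insert x B = insert (jsig \<sigma> x) (insert x ?S)" by auto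
  have disj: "insert x B \<inter> jsig \<sigma> ` insert x B = {}"
    using FamD(2)[OF B] xS sxS xsx by auto
  show ?thesis unfolding Fam_def using ind2 eq disj FamD(1)[OF B] x by auto
qed

lemma Fam_fixed_fin:
  assumes B: "B \<in> Fam" and T: "finite T"
  shows "T \<subseteq> B \<Longrightarrow> m \<in> jspan (T \<union> jsig \<sigma> ` T) \<Longrightarrow> jsig \<sigma> m = m \<Longrightarrow> m \<in> jspan (jnorm \<sigma> ` T)"
  using T
proof (induction T arbitrary: m rule: finite_induct)
  case empty then show ?case by simp
next
  case (insert b T)
  let ?S0 = "T \<union> jsig \<sigma> ` T"
  have BJ: "B \<subseteq> Jgrp" using FamD[OF B] by auto
  have bB: "b \<in> B" and TB: "T \<subseteq> B" using insert by auto
  have bJ: "b \<in> Jgrp" using bB BJ by auto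
  have sbJ: "jsig \<sigma> b \<in> Jgrp" using bJ by simp
  have S0J: "?S0 \<subseteq> Jgrp" using TB BJ by auto
  have S0J': "insert (jsig \<sigma> b) ?S0 \<subseteq> Jgrp" using S0J sbJ by auto
  have eqS: "insert b T \<union> jsig \<sigma> ` insert b T = insert b (insert (jsig \<sigma> b) ?S0)" by auto
  have "m \<in> jspan (insert b (insert (jsig \<sigma> b) ?S0))" using insert.prems eqS by simp
  then have "m \<in> jspan (insert (jsig \<sigma> b) ?S0) \<union> jmul b ` jspan (insert (jsig \<sigma> b) ?S0)"
    using jspan_insert[OF bJ S0J'] by simp
  moreover have "jspan (insert (jsig \<sigma> b) ?S0) = jspan ?S0 \<union> jmul (jsig \<sigma> b) ` jspan ?S0"
    using jspan_insert[OF sbJ S0J] .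
  ultimately obtain m' e where m': "m' \<in> jspan ?S0" and e: "e \<in> {jone, b, jsig \<sigma> b, jmul b (jsig \<sigma> b)}"
    and me: "m = jmul e m'"
  proof -
    assume H: "\<And>m' e. m' \<in> jspan ?S0 \<Longrightarrow> e \<in> {jone, b, jsig \<sigma> b, jmul b (jsig \<sigma> b)} \<Longrightarrow> m = jmul e m' \<Longrightarrow> thesis"
    assume "m \<in> jspan (insert (jsig \<sigma> b) ?S0) \<union> jmul b ` jspan (insert (jsig \<sigma> b) ?S0)"
      "jspan (insert (jsig \<sigma> b) ?S0) = jspan ?S0 \<union> jmul (jsig \<sigma> b) ` jspan ?S0"
    then consider (a) "m \<in> jspan ?S0" | (b) y where "y \<in> jspan ?S0" "m = jmul (jsig \<sigma> b) y"
      | (c) y where "y \<in> jspan ?S0" "m = jmul b y" | (d) y where "y \<in> jspan ?S0" "m = jmul b (jmul (jsig \<sigma> b) y)"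
      by blast
    then show thesis
    proof cases
      case a then show ?thesis using H[of m jone] jspan_J'[OF S0J] by simp
    next
      case (b y) then show ?thesis using H[of y "jsig \<sigma> b"] by simp
    next
      case (c y) then show ?thesis using H[of y b] by simp
    next
      case (d y) then show ?thesis using H[of y "jmul b (jsig \<sigma> b)"] by (simp add: jmul_assoc)
    qed
  qed
  have m'J: "m' \<in> Jgrp" using m' jspan_J'[OF S0J] by blast
  have eJ: "e \<in> Jgrp" using e bJ sbJ by auto
  have sm': "jsig \<sigma> m' \<in> jspan ?S0" using span_sig[OF S0J m'] sig_union by simp
  have "jmul e m' = jmul (jsig \<sigma> e) (jsig \<sigma> m')" using insert.prems(3) me jsig_mul by metis
  then have key: "jmul m' (jsig \<sigma> m') = jmul e (jsig \<sigma> e)"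
    using jswap[of e m' "jsig \<sigma> e" "jsig \<sigma> m'"] eJ m'J by simp
  show ?case
  proof (cases "e = b \<or> e = jsig \<sigma> b")
    case True
    then have "jmul e (jsig \<sigma> e) = jmul b (jsig \<sigma> b)" by (auto simp: jmul_comm)
    then have bsb: "jmul b (jsig \<sigma> b) \<in> jspan ?S0" using key jspan_mul[OF S0J m' sm'] by simp
    let ?R = "(B \<union> jsig \<sigma> ` B) - {b}"
    have disj: "B \<inter> jsig \<sigma> ` B = {}" using FamD(2)[OF B] .
    have sub1: "insert (jsig \<sigma> b) ?S0 \<subseteq> ?R"
      using disj bB TB insert.hyps(2) by auto
    have "jmul (jsig \<sigma> b) (jmul b (jsig \<sigma> b)) \<in> jspan (insert (jsig \<sigma> b) ?S0)"
      using jspan.mul[of "jsig \<sigma> b" "insert (jsig \<sigma> b) ?S0"] bsb jspan_mono[of ?S0 "insert (jsig \<sigma> b) ?S0"] by blast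
    then have "b \<in> jspan (insert (jsig \<sigma> b) ?S0)" using bJ sbJ by (simp add: jac)
    then have "b \<in> jspan ?R" using jspan_mono[OF sub1] by blast
    then show ?thesis using FamD(3)[OF B] bB unfolding jindep_def by blast
  next
    case False
    then have "jmul e (jsig \<sigma> e) = jone" using e bJ sbJ by (auto simp: jsig_mul jac)
    then have "jsig \<sigma> m' = m'" using key jcancel[of m' "jsig \<sigma> m'"] m'J by simp
    then have IH: "m' \<in> jspan (jnorm \<sigma> ` T)" using insert.IH[of m'] insert.prems m' by auto
    have NJ': "jnorm \<sigma> ` insert b T \<subseteq> Jgrp" using TB BJ bJ by auto
    have "m' \<in> jspan (jnorm \<sigma> ` insert b T)" using IH jspan_mono[of "jnorm \<sigma> ` T" "jnorm \<sigma> ` insert b T"] by blast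
    moreover have "e \<in> jspan (jnorm \<sigma> ` insert b T)"
      using False e jspan.one jspan_sub[OF NJ', of "jnorm \<sigma> b"] unfolding jnorm_def by auto
    ultimately show ?thesis using me jspan_mul[OF NJ'] by blast
  qed
qed

lemma Fam_fixed:
  assumes B: "B \<in> Fam" and m: "m \<in> jspan (B \<union> jsig \<sigma> ` B)" and fm: "jsig \<sigma> m = m"
  shows "m \<in> jspan (jnorm \<sigma> ` B)"
proof -
  obtain T0 where T0: "finite T0" "T0 \<subseteq> B \<union> jsig \<sigma> ` B" "m \<in> jspan T0" using jspan_finite[OF m] by blast
  define T where "T = (T0 \<inter> B) \<union> jsig \<sigma> ` (T0 \<inter> jsig \<sigma> ` B)"
  have fT: "finite T" unfolding T_def using T0 by auto
  have TB: "T \<subseteq> B" unfolding T_def by (auto simp: image_image)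
  have T0T: "T0 \<subseteq> T \<union> jsig \<sigma> ` T"
  proof
    fix c assume c: "c \<in> T0"
    show "c \<in> T \<union> jsig \<sigma> ` T"
    proof (cases "c \<in> B")
      case True then show ?thesis using c unfolding T_def by auto
    next
      case False then have "c \<in> jsig \<sigma> ` B" using c T0 by auto
      then have "jsig \<sigma> c \<in> T" using c unfolding T_def by auto
      then show ?thesis by (metis UnI2 image_eqI jsig_jsig)
    qed
  qed
  have "m \<in> jspan (T \<union> jsig \<sigma> ` T)" using T0(3) jspan_mono[OF T0T] by blast
  then have "m \<in> jspan (jnorm \<sigma> ` T)" using Fam_fixed_fin[OF B fT TB] fm by blast
  then show ?thesis using jspan_mono[of "jnorm \<sigma> ` T" "jnorm \<sigma> ` B"] TB by blast
qed

lemma Fam_norm_indep: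
  assumes B: "B \<in> Fam" shows "jindep (jnorm \<sigma> ` B)" "inj_on (jnorm \<sigma>) B"
proof -
  have BJ: "B \<subseteq> Jgrp" and disj: "B \<inter> jsig \<sigma> ` B = {}" and ind: "jindep (B \<union> jsig \<sigma> ` B)"
    using FamD[OF B] by auto
  have RJ: "(B \<union> jsig \<sigma> ` B) - {b} \<subseteq> Jgrp" for b using BJ by auto
  have sbB: "jsig \<sigma> b \<noteq> b'" if "b \<in> B" "b' \<in> B" for b b' using disj that by auto
  show "jindep (jnorm \<sigma> ` B)" unfolding jindep_def
  proof
    fix c assume "c \<in> jnorm \<sigma> ` B"
    then obtain b where b: "b \<in> B" "c = jnorm \<sigma> b" by blast
    let ?R = "(B \<union> jsig \<sigma> ` B) - {b}"
    have "jnorm \<sigma> ` B - {c} \<subseteq> jspan ?R"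
    proof
      fix d assume "d \<in> jnorm \<sigma> ` B - {c}"
      then obtain b' where b': "b' \<in> B" "d = jnorm \<sigma> b'" "b' \<noteq> b" using b by blast
      have "b' \<in> jspan ?R" "jsig \<sigma> b' \<in> jspan ?R"
        using jspan_sub[OF RJ] b' sbB[OF b'(1) b(1)] by auto
      then show "d \<in> jspan ?R" using b' jspan_mul[OF RJ] unfolding jnorm_def by blast
    qed
    then have "jspan (jnorm \<sigma> ` B - {c}) \<subseteq> jspan ?R"
      using jspan_least[OF jspan_subspace[OF RJ]] by blast
    moreover have "c \<notin> jspan ?R"
    proof
      assume "c \<in> jspan ?R"
      moreover have "jsig \<sigma> b \<in> jspan ?R" using jspan_sub[OF RJ] b sbB[OF b(1) b(1)] by auto
      ultimately have "jmul c (jsig \<sigma> b) \<in> jspan ?R" using jspan_mul[OF RJ] by blast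
      moreover have "jmul c (jsig \<sigma> b) = b" using b BJ unfolding jnorm_def by (auto simp: jac)
      ultimately show False using ind b unfolding jindep_def by auto
    qed
    ultimately show "c \<notin> jspan (jnorm \<sigma> ` B - {c})" by blast
  qed
  show "inj_on (jnorm \<sigma>) B"
  proof
    fix b b' assume b: "b \<in> B" and b': "b' \<in> B" and eq: "jnorm \<sigma> b = jnorm \<sigma> b'"
    show "b = b'"
    proof (rule ccontr)
      assume ne: "b \<noteq> b'"
      let ?R = "(B \<union> jsig \<sigma> ` B) - {b'}"
      have "b \<in> jspan ?R" "jsig \<sigma> b \<in> jspan ?R" "jsig \<sigma> b' \<in> jspan ?R"
        using jspan_sub[OF RJ] b b' ne sbB[OF b b'] sbB[OF b' b'] by auto
      then have "jmul (jmul b (jsig \<sigma> b)) (jsig \<sigma> b') \<in> jspan ?R" using jspan_mul[OF RJ] by blast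
      moreover have "jmul (jmul b (jsig \<sigma> b)) (jsig \<sigma> b') = b'"
        using eq b' BJ unfolding jnorm_def by (auto simp: jac)
      ultimately show False using ind b' unfolding jindep_def by auto
    qed
  qed
qed

lemma Fam_max: "\<exists>M\<in>Fam. \<forall>X\<in>Fam. M \<subseteq> X \<longrightarrow> X = M"
proof (rule subset_Zorn_nonempty)
  show "Fam \<noteq> {}" unfolding Fam_def jindep_def by auto
next
  fix \<C> assume C: "\<C> \<noteq> {}" "subset.chain Fam \<C>"
  then have CF: "\<C> \<subseteq> Fam" and tot: "\<And>X Y. X \<in> \<C> \<Longrightarrow> Y \<in> \<C> \<Longrightarrow> X \<subseteq> Y \<or> Y \<subseteq> X"
    unfolding subset_chain_def by auto
  let ?U = "\<Union>\<C>"
  have UJ: "?U \<subseteq> Jgrp" using CF FamD by blast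
  have disj: "?U \<inter> jsig \<sigma> ` ?U = {}"
  proof (rule ccontr)
    assume "?U \<inter> jsig \<sigma> ` ?U \<noteq> {}"
    then obtain x y X Y where "X \<in> \<C>" "Y \<in> \<C>" "x \<in> X" "y \<in> Y" "x = jsig \<sigma> y" by blast
    then show False using tot[of X Y] CF FamD(2) by blast
  qed
  have ind: "jindep (?U \<union> jsig \<sigma> ` ?U)"
  proof (rule jindep_finitary)
    fix T assume T: "finite T" "T \<subseteq> ?U \<union> jsig \<sigma> ` ?U"
    define T' where "T' = (T \<inter> ?U) \<union> jsig \<sigma> ` (T \<inter> jsig \<sigma> ` ?U)"
    have fT': "finite T'" unfolding T'_def using T by auto
    have T'U: "T' \<subseteq> ?U" unfolding T'_def by (auto simp: image_image)
    show "jindep T"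
    proof (cases "T' = {}")
      case True
      then have e1: "T \<inter> ?U = {}" and "jsig \<sigma> ` (T \<inter> jsig \<sigma> ` ?U) = {}"
        unfolding T'_def by simp_all
      then have e2: "T \<inter> jsig \<sigma> ` ?U = {}" by simp
      have "T = T \<inter> (?U \<union> jsig \<sigma> ` ?U)" using T(2) by (rule Int_absorb2[symmetric])
      also have "\<dots> = {}" by (simp only: Int_Un_distrib e1 e2 Un_empty_left)
      finally have "T = {}" .
      then show ?thesis unfolding jindep_def by simp
    next
      case False
      obtain X where X: "X \<in> \<C>" "T' \<subseteq> X"
        using finite_subset_Union_chain[OF fT' T'U C(1) C(2)] by blast
      have "T \<subseteq> X \<union> jsig \<sigma> ` X"
      proof
        fix c assume c: "c \<in> T"
        show "c \<in> X \<union> jsig \<sigma> ` X"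
        proof (cases "c \<in> ?U")
          case True then show ?thesis using c X unfolding T'_def by auto
        next
          case False then have "c \<in> jsig \<sigma> ` ?U" using c T by auto
          then have "jsig \<sigma> c \<in> jsig \<sigma> ` (T \<inter> jsig \<sigma> ` ?U)" using c by blast
          then have "jsig \<sigma> c \<in> X" using X(2) unfolding T'_def by blast
          then show ?thesis by (metis UnI2 image_eqI jsig_jsig)
        qed
      qed
      moreover have "X \<in> Fam" using X CF by blast
      ultimately show ?thesis using jindep_mono FamD(3) by blast
    qed
  qed
  show "?U \<in> Fam" unfolding Fam_def using UJ disj ind by blast
qed

end

context qctx begin

lemma hilbert90: assumes w: "w * \<sigma> w = 1" shows "\<exists>g. g \<noteq> 0 \<and> \<sigma> g = w * g"
proof (cases "1 + \<sigma> w = 0")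
  case False
  have "\<sigma> (1 + \<sigma> w) = w * (1 + \<sigma> w)" using w by (simp add: s_add algebra_simps)
  then show ?thesis using False by blast
next
  case True
  then have sw: "\<sigma> w = -1" by (simp add: add_eq_0_iff)
  then have w1: "w = -1" using s_neg[of 1] by (metis s_s s_one)
  obtain t where t: "\<sigma> t \<noteq> t" using s_nid by blast
  have e: "\<sigma> (t - \<sigma> t) = \<sigma> t - t" using s_add[of t "- \<sigma> t"] s_neg[of "\<sigma> t"] by simp
  have "\<sigma> (t - \<sigma> t) = w * (t - \<sigma> t)" unfolding e w1 by simp
  moreover have "t - \<sigma> t \<noteq> 0" using t by simp
  ultimately show ?thesis by blast
qed

lemma jnorm_sq: "jnorm \<sigma> (sqclass e) = sqclass (e * \<sigma> e)"
  unfolding jnorm_def by (simp add: sq_sig sq_mul)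

lemma minus_norm_elem: assumes u: "u \<noteq> 0" "u * \<sigma> u = -1"
  shows "\<exists>g. g \<in> Jgrp \<and> jsig \<sigma> g = g \<and> g \<notin> NJ \<sigma>"
proof -
  let ?w = "u * u"
  have "?w * \<sigma> ?w = (u * \<sigma> u) * (u * \<sigma> u)" by (simp add: s_mul algebra_simps)
  then have "?w * \<sigma> ?w = 1" using u by simp
  then obtain \<gamma> where g: "\<gamma> \<noteq> 0" "\<sigma> \<gamma> = ?w * \<gamma>" using hilbert90 by blast
  let ?g = "sqclass \<gamma>"
  have gJ: "?g \<in> Jgrp" using g Jgrp_iff by blast
  have "jsig \<sigma> ?g = jmul (sqclass ?w) ?g" using g by (simp add: sq_sig sq_mul)
  also have "\<dots> = ?g" using u gJ by (simp add: sq_self jone_def[symmetric])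
  finally have gfix: "jsig \<sigma> ?g = ?g" .
  have "?g \<notin> NJ \<sigma>"
  proof
    assume "?g \<in> NJ \<sigma>"
    then obtain A where A: "A \<in> Jgrp" "?g = jnorm \<sigma> A" unfolding NJ_def by blast
    then obtain e where e: "e \<noteq> 0" "A = sqclass e" using Jgrp_iff by blast
    have "\<gamma> \<in> sqclass (e * \<sigma> e)" using A e jnorm_sq sq_mem by metis
    then obtain t where t: "t \<noteq> 0" "\<gamma> = e * \<sigma> e * t^2" unfolding sqclass_def by blast
    have "\<sigma> \<gamma> = \<sigma> e * e * (\<sigma> t)^2" using t by (simp add: s_mul s_pow2)
    then have "e * \<sigma> e * (\<sigma> t)^2 = e * \<sigma> e * (u * t)^2" using g t
      by (simp add: power_mult_distrib power2_eq_square algebra_simps)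
    moreover have "e * \<sigma> e \<noteq> 0" using e by simp
    ultimately have "(\<sigma> t)^2 = (u * t)^2" by simp
    then obtain c where c: "c = 1 \<or> c = -1" "\<sigma> t = c * (u * t)"
      unfolding power2_eq_iff by (metis mult_minus_left mult_1)
    have sc: "\<sigma> c = c" using c s_neg[of 1] by auto
    have cc: "c * c = 1" using c by auto
    have "t = \<sigma> (\<sigma> t)" by simp
    also have "\<dots> = \<sigma> (c * (u * t))" using c(2) by simp
    also have "\<dots> = c * (\<sigma> u * (c * (u * t)))" using sc c(2) by (simp add: s_mul)
    also have "\<dots> = (c * c) * (u * \<sigma> u) * t" by (simp only: mult_ac)
    also have "\<dots> = - t" using cc u by simp
    finally have tt: "t = - t" .
    have "t + t = (- t) + t" using tt by (rule arg_cong[where f="\<lambda>x. x + t"])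
    then have "t + t = 0" by simp
    then have "2 * t = 0" by (simp only: mult_2)
    then show False using t char by simp
  qed
  then show ?thesis using gJ gfix by blast
qed

definition JG :: "'k set set" where "JG = {A \<in> Jgrp. jsig \<sigma> A = A}"

lemma JG_subspace: "jsubspace JG"
  unfolding jsubspace_def JG_def by (auto simp: jsig_mul)

lemma NJ_JG: "NJ \<sigma> \<subseteq> JG"
  unfolding NJ_def JG_def by auto

lemma image_norm_subspace: assumes Y: "jsubspace Y" shows "jsubspace (jnorm \<sigma> ` Y)"
  unfolding jsubspace_def
proof (intro conjI ballI)
  show "jnorm \<sigma> ` Y \<subseteq> Jgrp" using jsubspaceD(1)[OF Y] by auto
  show "jone \<in> jnorm \<sigma> ` Y" using jsubspaceD(2)[OF Y] jnorm_one by (metis image_eqI)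
  fix A B assume "A \<in> jnorm \<sigma> ` Y" "B \<in> jnorm \<sigma> ` Y"
  then obtain a b where "a \<in> Y" "b \<in> Y" "A = jnorm \<sigma> a" "B = jnorm \<sigma> b" by blast
  then show "jmul A B \<in> jnorm \<sigma> ` Y" using jnorm_mul[of a b] jsubspaceD(3)[OF Y] by (metis image_eqI)
qed

lemma submodule_fixed: "jsubspace X \<Longrightarrow> X \<subseteq> JG \<Longrightarrow> jsubmodule \<sigma> X"
  unfolding jsubmodule_def JG_def by auto

lemma Xexists: "\<exists>X. jsubspace X \<and> X \<subseteq> JG \<and> NJ \<sigma> \<inter> X = {jone} \<and>
   ((\<exists>u. u \<noteq> 0 \<and> u * \<sigma> u = -1) \<longrightarrow> (\<exists>B. jbasis B X \<and> card B = 1 \<and> finite B)) \<and>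
   (\<not> (\<exists>u. u \<noteq> 0 \<and> u * \<sigma> u = -1) \<longrightarrow> X = {jone})"
proof (cases "\<exists>u. u \<noteq> 0 \<and> u * \<sigma> u = -1")
  case False
  have "jsubspace {jone}" unfolding jsubspace_def by auto
  moreover have "{jone} \<subseteq> JG" unfolding JG_def by auto
  moreover have "NJ \<sigma> \<inter> {jone} = {jone}" using jsubspaceD(2)[OF NJ_subspace] by auto
  ultimately show ?thesis using False by blast
next
  case True
  then obtain g where g: "g \<in> Jgrp" "jsig \<sigma> g = g" "g \<notin> NJ \<sigma>" using minus_norm_elem by blast
  have g1: "g \<noteq> jone" using g jsubspaceD(2)[OF NJ_subspace] by auto
  have sp: "jspan {g} = {jone, g}" using jspan_insert[of g "{}"] g by (simp add: jspan_empty insert_commute)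
  have "jsubspace {jone, g}" unfolding jsubspace_def using g by auto
  moreover have "{jone, g} \<subseteq> JG" unfolding JG_def using g by auto
  moreover have "NJ \<sigma> \<inter> {jone, g} = {jone}" using jsubspaceD(2)[OF NJ_subspace] g by auto
  moreover have "jbasis {g} {jone, g}" unfolding jbasis_def jindep_def using sp g1 by (auto simp: jspan_empty)
  ultimately show ?thesis using True by (intro exI[of _ "{jone, g}"]) auto
qed

lemma max_free_part:
  "\<forall>M B. jmax_free \<sigma> M \<and> jfree_basis \<sigma> B M \<longrightarrow> (\<exists>C. jbasis C (NJ \<sigma>) \<and> B \<approx> C)"
proof (intro allI impI, elim conjE)
  fix M B assume mx: "jmax_free \<sigma> M" and fb: "jfree_basis \<sigma> B M"
  have Msub: "jsubmodule \<sigma> M" using mx unfolding jmax_free_def jfree_def by blast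
  have MJ: "M \<subseteq> Jgrp" using Msub unfolding jsubmodule_def jsubspace_def by blast
  have disj: "B \<inter> jsig \<sigma> ` B = {}" and bas: "jbasis (B \<union> jsig \<sigma> ` B) M"
    using fb unfolding jfree_basis_def by auto
  have SM: "B \<union> jsig \<sigma> ` B \<subseteq> M" and ind: "jindep (B \<union> jsig \<sigma> ` B)" and spM: "jspan (B \<union> jsig \<sigma> ` B) = M"
    using bas unfolding jbasis_def by auto
  have BF: "B \<in> Fam" unfolding Fam_def using SM MJ disj ind by auto
  have NJM: "NJ \<sigma> \<subseteq> M"
  proof
    fix n assume "n \<in> NJ \<sigma>"
    then obtain A where A: "A \<in> Jgrp" "n = jnorm \<sigma> A" unfolding NJ_def by blast
    show "n \<in> M"
    proof (rule ccontr)
      assume nM: "n \<notin> M"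
      let ?B = "insert A B"
      let ?W = "jspan (?B \<union> jsig \<sigma> ` ?B)"
      have BF': "?B \<in> Fam" using Fam_ext[OF BF A(1)] nM A spM by simp
      have SJ': "?B \<union> jsig \<sigma> ` ?B \<subseteq> Jgrp" using FamD(4)[OF BF'] .
      have "jsig \<sigma> ` (?B \<union> jsig \<sigma> ` ?B) \<subseteq> ?B \<union> jsig \<sigma> ` ?B" by (simp only: sig_union subset_refl)
      then have "jsubmodule \<sigma> ?W" using span_submodule[OF SJ'] by blast
      moreover have "jfree_basis \<sigma> ?B ?W" unfolding jfree_basis_def jbasis_def
        using FamD(2,3)[OF BF'] jspan_sub[OF SJ'] by blast
      ultimately have "jfree \<sigma> ?W" unfolding jfree_def by blast
      moreover have "M \<subseteq> ?W" using spM jspan_mono[of "B \<union> jsig \<sigma> ` B" "?B \<union> jsig \<sigma> ` ?B"] by blast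
      ultimately have "?W = M" using mx unfolding jmax_free_def by blast
      moreover have "A \<in> ?W" using jspan_sub[OF SJ'] by blast
      ultimately have "A \<in> M" by simp
      then have "jsig \<sigma> A \<in> M" using Msub unfolding jsubmodule_def by blast
      then have "n \<in> M" using \<open>A \<in> M\<close> Msub A(2) unfolding jsubmodule_def jsubspace_def jnorm_def by blast
      then show False using nM by simp
    qed
  qed
  let ?C = "jnorm \<sigma> ` B"
  have BJ: "B \<subseteq> Jgrp" using FamD(1)[OF BF] .
  have CNJ: "?C \<subseteq> NJ \<sigma>" unfolding NJ_def using BJ by auto
  have "jspan ?C \<subseteq> NJ \<sigma>" using jspan_least[OF NJ_subspace CNJ] .
  moreover have "NJ \<sigma> \<subseteq> jspan ?C"
  proof
    fix n assume n: "n \<in> NJ \<sigma>"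
    then have "n \<in> jspan (B \<union> jsig \<sigma> ` B)" using NJM spM by auto
    moreover have "jsig \<sigma> n = n" using n unfolding NJ_def by auto
    ultimately show "n \<in> jspan ?C" using Fam_fixed[OF BF] by blast
  qed
  ultimately have "jbasis ?C (NJ \<sigma>)" unfolding jbasis_def using CNJ Fam_norm_indep(1)[OF BF] by blast
  moreover have "B \<approx> ?C" using eqpoll_sym[OF inj_on_image_eqpoll_self[OF Fam_norm_indep(2)[OF BF]]] .
  ultimately show "\<exists>C. jbasis C (NJ \<sigma>) \<and> B \<approx> C" by blast
qed

end

context qctx begin

lemma part1: "\<exists>X Y Z. jsubmodule \<sigma> X \<and> jsubmodule \<sigma> Y \<and> jsubmodule \<sigma> Z \<and>
             X \<subseteq> Jgrp \<and> Y \<subseteq> Jgrp \<and> Z \<subseteq> Jgrp \<and>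
             jdirect3 Jgrp X Y Z \<and>
             ((\<exists>u. u \<noteq> 0 \<and> u * \<sigma> u = -1) \<longrightarrow> (\<exists>B. jbasis B X \<and> card B = 1 \<and> finite B)) \<and>
             (\<not> (\<exists>u. u \<noteq> 0 \<and> u * \<sigma> u = -1) \<longrightarrow> X = {jone}) \<and>
             jfree \<sigma> Y \<and> jfixed \<sigma> Y = NJ \<sigma> \<and>
             (\<forall>A\<in>Z. jsig \<sigma> A = A)"
proof -
  obtain B0 where B0: "B0 \<in> Fam" and mx: "\<And>X. X \<in> Fam \<Longrightarrow> B0 \<subseteq> X \<Longrightarrow> X = B0"
    using Fam_max by blast
  let ?S = "B0 \<union> jsig \<sigma> ` B0"
  define Y where "Y = jspan ?S"
  have SJ: "?S \<subseteq> Jgrp" using FamD(4)[OF B0] .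
  have "jsig \<sigma> ` ?S \<subseteq> ?S" by (simp only: sig_union subset_refl)
  then have Ysub: "jsubmodule \<sigma> Y" unfolding Y_def using span_submodule[OF SJ] by blast
  have Yspace: "jsubspace Y" using Ysub unfolding jsubmodule_def by blast
  have YJ: "Y \<subseteq> Jgrp" using jsubspaceD(1)[OF Yspace] .
  have SY: "?S \<subseteq> Y" unfolding Y_def using jspan_sub[OF SJ] by blast
  have NJY: "NJ \<sigma> \<subseteq> Y"
  proof
    fix n assume "n \<in> NJ \<sigma>"
    then obtain A where A: "A \<in> Jgrp" "n = jnorm \<sigma> A" unfolding NJ_def by blast
    show "n \<in> Y"
    proof (rule ccontr)
      assume nY: "n \<notin> Y"
      then have "insert A B0 \<in> Fam" using Fam_ext[OF B0 A(1)] A unfolding Y_def by simp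
      then have "insert A B0 = B0" using mx by blast
      then have "A \<in> B0" by blast
      then have "A \<in> Y" "jsig \<sigma> A \<in> Y" using SY by auto
      then have "n \<in> Y" using A(2) jsubspaceD(3)[OF Yspace] unfolding jnorm_def by blast
      then show False using nY by simp
    qed
  qed
  have YF: "jfree \<sigma> Y" unfolding jfree_def jfree_basis_def jbasis_def
    using Ysub FamD(2,3)[OF B0] SY Y_def by blast
  have fixY: "jfixed \<sigma> Y = NJ \<sigma>"
  proof
    show "jfixed \<sigma> Y \<subseteq> NJ \<sigma>"
    proof
      fix m assume "m \<in> jfixed \<sigma> Y"
      then have "m \<in> Y" "jsig \<sigma> m = m" unfolding jfixed_def by auto
      then have "m \<in> jspan (jnorm \<sigma> ` B0)" using Fam_fixed[OF B0] unfolding Y_def by blast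
      moreover have "jnorm \<sigma> ` B0 \<subseteq> NJ \<sigma>" unfolding NJ_def using FamD(1)[OF B0] by auto
      ultimately show "m \<in> NJ \<sigma>" using jspan_least[OF NJ_subspace] by blast
    qed
    show "NJ \<sigma> \<subseteq> jfixed \<sigma> Y" using NJY unfolding jfixed_def NJ_def by auto
  qed
  have NYJ: "NJ \<sigma> \<subseteq> jnorm \<sigma> ` Y"
  proof
    fix n assume n: "n \<in> NJ \<sigma>"
    then have "n \<in> jfixed \<sigma> Y" using fixY by simp
    then have "n \<in> Y" "jsig \<sigma> n = n" unfolding jfixed_def by auto
    then have "n \<in> jspan (jnorm \<sigma> ` B0)" using Fam_fixed[OF B0] unfolding Y_def by blast
    moreover have "jnorm \<sigma> ` B0 \<subseteq> jnorm \<sigma> ` Y" using SY by auto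
    ultimately show "n \<in> jnorm \<sigma> ` Y" using jspan_least[OF image_norm_subspace[OF Yspace]] by blast
  qed
  obtain X where Xs: "jsubspace X" and XG: "X \<subseteq> JG" and NX: "NJ \<sigma> \<inter> X = {jone}"
    and X1: "(\<exists>u. u \<noteq> 0 \<and> u * \<sigma> u = -1) \<longrightarrow> (\<exists>B. jbasis B X \<and> card B = 1 \<and> finite B)"
    and X2: "\<not> (\<exists>u. u \<noteq> 0 \<and> u * \<sigma> u = -1) \<longrightarrow> X = {jone}"
    using Xexists by (elim exE conjE) (rule that, assumption+)
  define U where "U = {jmul n x | n x. n \<in> NJ \<sigma> \<and> x \<in> X}"
  have NJs: "jsubspace (NJ \<sigma>)" by (rule NJ_subspace)
  have XJ: "X \<subseteq> Jgrp" using jsubspaceD(1)[OF Xs] .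
  have NJJ: "NJ \<sigma> \<subseteq> Jgrp" using jsubspaceD(1)[OF NJs] .
  have Us: "jsubspace U" unfolding jsubspace_def
  proof (intro conjI ballI)
    show "U \<subseteq> Jgrp" unfolding U_def using XJ NJJ jmul_J by blast
    show "jone \<in> U" unfolding U_def using jsubspaceD(2)[OF Xs] jsubspaceD(2)[OF NJs]
      by (intro CollectI exI[of _ jone]) simp
    fix A B assume "A \<in> U" "B \<in> U"
    then obtain n x n' x' where "n \<in> NJ \<sigma>" "x \<in> X" "n' \<in> NJ \<sigma>" "x' \<in> X" "A = jmul n x" "B = jmul n' x'"
      unfolding U_def by blast
    moreover have "jmul A B = jmul (jmul n n') (jmul x x')" if "A = jmul n x" "B = jmul n' x'"
      using that by (simp only: jac)
    ultimately show "jmul A B \<in> U" unfolding U_def using jsubspaceD(3)[OF Xs] jsubspaceD(3)[OF NJs] by blast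
  qed
  have UG: "U \<subseteq> JG"
  proof
    fix A assume "A \<in> U"
    then obtain n x where nx: "n \<in> NJ \<sigma>" "x \<in> X" "A = jmul n x" unfolding U_def by blast
    then have "n \<in> Jgrp" "jsig \<sigma> n = n" "x \<in> Jgrp" "jsig \<sigma> x = x" using XG NJ_JG unfolding JG_def by auto
    then show "A \<in> JG" unfolding JG_def using nx(3) by (simp add: jsig_mul)
  qed
  obtain Z where Zs: "jsubspace Z" and ZG: "Z \<subseteq> JG" and UZ: "U \<inter> Z = {jone}"
    and UZsp: "\<forall>v\<in>JG. \<exists>u\<in>U. \<exists>w\<in>Z. v = jmul u w"
    using complement[OF Us JG_subspace UG] by blast
  have ZJ: "Z \<subseteq> Jgrp" using jsubspaceD(1)[OF Zs] .
  have fixG: "\<And>A. A \<in> JG \<Longrightarrow> jsig \<sigma> A = A" "\<And>A. A \<in> JG \<Longrightarrow> A \<in> Jgrp" unfolding JG_def by auto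
  have dir: "jdirect3 Jgrp X Y Z" unfolding jdirect3_def
  proof
    fix A :: "'k set" assume AJ: "A \<in> Jgrp"
    have "jnorm \<sigma> A \<in> NJ \<sigma>" unfolding NJ_def using AJ by blast
    then obtain y1 where y1: "y1 \<in> Y" "jnorm \<sigma> A = jnorm \<sigma> y1" using NYJ by blast
    have y1J: "y1 \<in> Jgrp" using y1 YJ by auto
    have "jnorm \<sigma> (jmul A y1) = jone" using y1 y1J AJ by (simp add: jnorm_mul)
    then have "jmul A y1 \<in> JG" unfolding JG_def using fixed_iff[of "jmul A y1"] AJ y1J by simp
    then obtain u z where u: "u \<in> U" and z: "z \<in> Z" and uz: "jmul A y1 = jmul u z" using UZsp by blast
    then obtain n x where n: "n \<in> NJ \<sigma>" and x: "x \<in> X" and unx: "u = jmul n x" unfolding U_def by blast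
    have nJ: "n \<in> Jgrp" and xJ: "x \<in> Jgrp" and zJ: "z \<in> Jgrp" using n x z NJJ XJ ZJ by auto
    have yY: "jmul n y1 \<in> Y" using n NJY y1 jsubspaceD(3)[OF Yspace] by blast
    have "A = jmul (jmul A y1) y1" using AJ y1J by (simp add: jac)
    also have "\<dots> = jmul x (jmul (jmul n y1) z)" unfolding uz unx by (simp only: jac)
    finally have Aeq: "A = jmul x (jmul (jmul n y1) z)" .
    show "\<exists>!(x, y, z). x \<in> X \<and> y \<in> Y \<and> z \<in> Z \<and> A = jmul x (jmul y z)"
    proof (rule ex1I[of _ "(x, jmul n y1, z)"])
      show "case (x, jmul n y1, z) of (x, y, z) \<Rightarrow> x \<in> X \<and> y \<in> Y \<and> z \<in> Z \<and> A = jmul x (jmul y z)"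
        using x yY z Aeq by simp
    next
      fix p assume "case p of (x, y, z) \<Rightarrow> x \<in> X \<and> y \<in> Y \<and> z \<in> Z \<and> A = jmul x (jmul y z)"
      then obtain x' y' z' where p: "p = (x', y', z')" and x': "x' \<in> X" and y': "y' \<in> Y" and z': "z' \<in> Z"
        and A': "A = jmul x' (jmul y' z')" by (cases p) auto
      let ?y = "jmul n y1"
      have yJ: "?y \<in> Jgrp" and x'J: "x' \<in> Jgrp" and y'J: "y' \<in> Jgrp" and z'J: "z' \<in> Jgrp"
        using yY x' y' z' YJ XJ ZJ by auto
      have "jmul (jmul x z) ?y = jmul (jmul x' z') y'" using Aeq A' by (simp only: jac)
      then have yy: "jmul ?y y' = jmul (jmul x z) (jmul x' z')"
        using jswap[of "jmul x z" ?y "jmul x' z'" y'] xJ zJ x'J z'J yJ y'J by simp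
      have fx: "jsig \<sigma> x = x" "jsig \<sigma> x' = x'" "jsig \<sigma> z = z" "jsig \<sigma> z' = z'"
        using x x' z z' XG ZG fixG by auto
      have "jsig \<sigma> (jmul ?y y') = jmul ?y y'" unfolding yy using fx by (simp add: jsig_mul)
      moreover have "jmul ?y y' \<in> Y" using yY y' jsubspaceD(3)[OF Yspace] by blast
      ultimately have "jmul ?y y' \<in> jfixed \<sigma> Y" unfolding jfixed_def by blast
      then have nn: "jmul ?y y' \<in> NJ \<sigma>" using fixY by simp
      have nnJ: "jmul ?y y' \<in> Jgrp" using nn NJJ by auto
      have zz: "jmul z z' = jmul (jmul ?y y') (jmul x x')" unfolding yy using xJ zJ x'J z'J
        by (simp add: jac)
      have "jmul (jmul ?y y') (jmul x x') \<in> U" unfolding U_def using nn x x' jsubspaceD(3)[OF Xs] by blast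
      then have inU: "jmul z z' \<in> U" unfolding zz .
      have "jmul z z' \<in> Z" using z z' jsubspaceD(3)[OF Zs] by blast
      then have "jmul z z' \<in> U \<inter> Z" using inU by (rule IntI[rotated])
      then have "jmul z z' = jone" unfolding UZ by simp
      then have zeq: "z = z'" using jcancel[OF zJ z'J] by simp
      then have "jmul ?y y' = jmul x x'" using yy xJ x'J zJ z'J by (simp add: jac)
      moreover have "jmul x x' \<in> X" using x x' jsubspaceD(3)[OF Xs] by blast
      ultimately have "jmul x x' \<in> NJ \<sigma> \<inter> X" using nn by simp
      then have "jmul x x' = jone" using NX by blast
      then have xeq: "x = x'" using jcancel[OF xJ x'J] by simp
      then have "jmul ?y y' = jone" using \<open>jmul ?y y' = jmul x x'\<close> xJ by simp
      then have "?y = y'" using jcancel[OF yJ y'J] by simp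
      then show "p = (x, ?y, z)" using p xeq zeq by simp
    qed
  qed
  have "jsubmodule \<sigma> X" using submodule_fixed[OF Xs XG] .
  moreover have "jsubmodule \<sigma> Z" using submodule_fixed[OF Zs ZG] .
  moreover have "\<forall>A\<in>Z. jsig \<sigma> A = A" using ZG fixG by blast
  ultimately show ?thesis using Ysub XJ YJ ZJ dir X1 X2 YF fixY by blast
qed

end

theorem theorem2:
  fixes \<sigma> :: "'k::field \<Rightarrow> 'k"
  assumes char: "(2::'k) \<noteq> 0"
    and aut: "qaut \<sigma>"
  shows "(\<exists>X Y Z. jsubmodule \<sigma> X \<and> jsubmodule \<sigma> Y \<and> jsubmodule \<sigma> Z \<and>
             X \<subseteq> Jgrp \<and> Y \<subseteq> Jgrp \<and> Z \<subseteq> Jgrp \<and>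
             jdirect3 Jgrp X Y Z \<and>
             ((\<exists>u. u \<noteq> 0 \<and> u * \<sigma> u = -1) \<longrightarrow> (\<exists>B. jbasis B X \<and> card B = 1 \<and> finite B)) \<and>
             (\<not> (\<exists>u. u \<noteq> 0 \<and> u * \<sigma> u = -1) \<longrightarrow> X = {jone}) \<and>
             jfree \<sigma> Y \<and> jfixed \<sigma> Y = NJ \<sigma> \<and>
             (\<forall>A\<in>Z. jsig \<sigma> A = A))
       \<and> (\<forall>M B. jmax_free \<sigma> M \<and> jfree_basis \<sigma> B M \<longrightarrow>
             (\<exists>C. jbasis C (NJ \<sigma>) \<and> B \<approx> C))"
proof -
  interpret qctx \<sigma> using char aut by unfold_locales
  show ?thesis using part1 max_free_part by blast
qed

end
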